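(* For every formula $\phi\in\mathbf{LTL}(\mathbf{X},\wedge)$ there exists a pattern $P$ which is equivalent to $\phi$ (i.e. for every word $w$ and position $i$, $w,i\models P$ iff $w,i\models\phi$) and whose size is at most the size of $\phi$.
   Context: Alphabet $\Sigma=\{a,b\}$. Words are nonempty, indexed from position 1; $w(i)$ is the letter at position $i$. $\mathbf{LTL}(\mathbf{X},\wedge)$ consists of formulas built from atomic formulas $c\in\Sigma$, conjunction $\wedge$ and the next operator $\mathbf{X}$. Semantics on a word $w$ of length $\ell$, position $i\in[1,\ell]$: $w,i\models c$ iff $w(i)=c$; $w,i\models\phi_1\wedge\phi_2$ iff both hold; $w,i\models\mathbf{X}\phi$ iff $i<\ell$ and $w,i+1\models\phi$. The size of a formula is the number of nodes of its syntax tree; $\mathbf{X}^i$ denotes $i$ nested applications of $\mathbf{X}$ (each contributing 1 to the size). Patterns are the formulas generated by the grammar $P ::= \mathbf{X}^i c \mid \mathbf{X}^i(c\wedge P)$ with $i\ge 0$, $c\in\Sigma$. Equivalently a pattern has the form $\mathbf{X}^{i_1-1}(c_1\wedge\mathbf{X}^{i_2-i_1}(\cdots\wedge\mathbf{X}^{i_p-i_{p-1}}c_p)\cdots)$ with $1\le i_1<\dots<i_p$ and $c_q\in\Sigma$; it has size $i_p+2(p-1)$. (A formula such as $a\wedge b$ is also a pattern and is unsatisfiable.) *)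

theory Defs
  imports Main
begin

datatype letter = La | Lb

datatype ltl = Atom letter | Conj ltl ltl | Nxt ltl

text \<open>Words are nonempty lists; positions are 1-based, w(i) = w ! (i - 1).
  Satisfaction is only meaningful for 1 \<le> i \<le> length w.\<close>
fun sat :: "letter list \<Rightarrow> nat \<Rightarrow> ltl \<Rightarrow> bool" where
  "sat w i (Atom c) = (w ! (i - 1) = c)"
| "sat w i (Conj p q) = (sat w i p \<and> sat w i q)"
| "sat w i (Nxt p) = (i < length w \<and> sat w (i + 1) p)"

fun fsize :: "ltl \<Rightarrow> nat" where
  "fsize (Atom c) = 1"
| "fsize (Conj p q) = fsize p + fsize q + 1"
| "fsize (Nxt p) = fsize p + 1"

fun Xpow :: "nat \<Rightarrow> ltl \<Rightarrow> ltl" where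
  "Xpow 0 p = p"
| "Xpow (Suc n) p = Nxt (Xpow n p)"

inductive is_pattern :: "ltl \<Rightarrow> bool" where
  pat_atom: "is_pattern (Xpow i (Atom c))"
| pat_conj: "is_pattern P \<Longrightarrow> is_pattern (Xpow i (Conj (Atom c) P))"

end

theory Submission
  imports Defs
begin

lemma sat_Xpow:
  "1 \<le> i \<Longrightarrow> i \<le> length w \<Longrightarrow>
   sat w i (Xpow n p) \<longleftrightarrow> i + n \<le> length w \<and> sat w (i + n) p"
proof (induction n arbitrary: i)
  case 0 then show ?case by simp
next
  case (Suc n)
  show ?case
  proof (cases "i < length w")
    case True
    with Suc.IH[of "i+1"] Suc.prems show ?thesis by auto
  next
    case False then show ?thesis by simp
  qed
qed

lemma fsize_Xpow: "fsize (Xpow n p) = n + fsize p"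
  by (induction n) auto

lemma pat_Xpow_atom: "is_pattern (Xpow i (Atom c))" by (rule pat_atom)

fun mk :: "nat \<Rightarrow> (nat \<times> letter) list \<Rightarrow> ltl" where
  "mk b [] = Atom La"
| "mk b [(d,c)] = Xpow (d - b) (Atom c)"
| "mk b ((d,c)#L) = Xpow (d - b) (Conj (Atom c) (mk d L))"

definition semL :: "letter list \<Rightarrow> nat \<Rightarrow> (nat \<times> letter) list \<Rightarrow> bool" where
  "semL w i L = (\<forall>(d,c)\<in>set L. i + d \<le> length w \<and> w ! (i + d - 1) = c)"

lemma mk_props:
  "L \<noteq> [] \<Longrightarrow> sorted (map fst L) \<Longrightarrow> (\<forall>d\<in>fst ` set L. b \<le> d) \<Longrightarrow>
   is_pattern (mk b L) \<and> fsize (mk b L) + b + 1 = Max (fst ` set L) + 2 * length L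
   \<and> (\<forall>w i. 1 \<le> i \<and> i \<le> length w \<longrightarrow>
        (sat w i (mk b L) \<longleftrightarrow> (\<forall>(d,c)\<in>set L. i + (d - b) \<le> length w \<and> w ! (i + (d - b) - 1) = c)))"
proof (induction b L rule: mk.induct)
  case (1 b) then show ?case by simp
next
  case (2 b d c)
  then show ?case
    by (auto simp: sat_Xpow fsize_Xpow intro: pat_atom)
next
  case (3 b d c v va)
  let ?L = "v # va"
  have srt: "sorted (map fst ?L)" using "3.prems" by simp
  have ge: "\<forall>x\<in>fst ` set ?L. d \<le> x" using "3.prems" by auto
  have bd: "b \<le> d" using "3.prems" by auto
  from "3.IH"[OF _ srt ge] have IH:
    "is_pattern (mk d ?L)" "fsize (mk d ?L) + d + 1 = Max (fst ` set ?L) + 2 * length ?L"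
    "\<And>w i. 1 \<le> i \<Longrightarrow> i \<le> length w \<Longrightarrow>
        (sat w i (mk d ?L) \<longleftrightarrow> (\<forall>(d',c')\<in>set ?L. i + (d' - d) \<le> length w \<and> w ! (i + (d' - d) - 1) = c'))"
    by auto
  have mx: "Max (fst ` set ((d,c) # ?L)) = Max (fst ` set ?L)"
  proof -
    have "fst ` set ((d,c) # ?L) = insert d (fst ` set ?L)" by simp
    moreover have "Max (insert d (fst ` set ?L)) = max d (Max (fst ` set ?L))"
      by (rule Max_insert) auto
    moreover have "d \<le> Max (fst ` set ?L)" using ge
      by (meson Max_ge finite_imageI finite_set imageI list.set_intros(1) order_trans)
    ultimately show ?thesis by simp
  qed
  have pat: "is_pattern (mk b ((d,c) # ?L))" using IH(1) by (simp add: pat_conj)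
  have sz: "fsize (mk b ((d,c) # ?L)) + b + 1 = Max (fst ` set ((d,c) # ?L)) + 2 * length ((d,c) # ?L)"
    using IH(2) bd mx by (simp add: fsize_Xpow)
  have sem: "sat w i (mk b ((d,c) # ?L)) \<longleftrightarrow>
      (\<forall>(d',c')\<in>set ((d,c) # ?L). i + (d' - b) \<le> length w \<and> w ! (i + (d' - b) - 1) = c')"
    if i: "1 \<le> i" "i \<le> length w" for w i
  proof -
    have "sat w i (mk b ((d,c) # ?L)) \<longleftrightarrow>
       i + (d - b) \<le> length w \<and> w ! (i + (d - b) - 1) = c \<and> sat w (i + (d - b)) (mk d ?L)"
      using i by (simp add: sat_Xpow)
    also have "\<dots> \<longleftrightarrow> i + (d - b) \<le> length w \<and> w ! (i + (d - b) - 1) = c \<and>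
        (\<forall>(d',c')\<in>set ?L. i + (d - b) + (d' - d) \<le> length w \<and> w ! (i + (d - b) + (d' - d) - 1) = c')"
      using IH(3)[of "i + (d - b)" w] i by auto
    also have "\<dots> \<longleftrightarrow> (\<forall>(d',c')\<in>set ((d,c) # ?L). i + (d' - b) \<le> length w \<and> w ! (i + (d' - b) - 1) = c')"
    proof -
      have eq: "\<forall>x\<in>set ?L. i + (d - b) + (fst x - d) = i + (fst x - b)"
        using ge bd by auto
      have "(\<forall>x\<in>set ?L. i + (d - b) + (fst x - d) \<le> length w \<and> w ! (i + (d - b) + (fst x - d) - 1) = snd x)
          \<longleftrightarrow> (\<forall>x\<in>set ?L. i + (fst x - b) \<le> length w \<and> w ! (i + (fst x - b) - 1) = snd x)"
        using eq by (metis (no_types, lifting))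
      then show ?thesis by (simp add: split_beta)
    qed
    finally show ?thesis .
  qed
  show ?case
    apply (intro conjI allI impI)
      apply (rule pat)
     apply (rule sz)
    apply (rule sem) by auto
qed

lemma main:
  "\<exists>L. L \<noteq> [] \<and> sorted (map fst L) \<and>
     (\<forall>w i. 1 \<le> i \<and> i \<le> length w \<longrightarrow> (sat w i \<phi> \<longleftrightarrow> semL w i L)) \<and>
     Max (fst ` set L) + 2 * length L \<le> fsize \<phi> + 1"
proof (induction \<phi>)
  case (Atom c)
  show ?case by (rule exI[of _ "[(0,c)]"]) (auto simp: semL_def)
next
  case (Conj p q)
  then obtain L1 L2 where
    L1: "L1 \<noteq> []" "\<forall>w i. 1 \<le> i \<and> i \<le> length w \<longrightarrow> (sat w i p \<longleftrightarrow> semL w i L1)"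
        "Max (fst ` set L1) + 2 * length L1 \<le> fsize p + 1" and
    L2: "L2 \<noteq> []" "\<forall>w i. 1 \<le> i \<and> i \<le> length w \<longrightarrow> (sat w i q \<longleftrightarrow> semL w i L2)"
        "Max (fst ` set L2) + 2 * length L2 \<le> fsize q + 1"
    by blast
  define L where "L = sort_key fst (L1 @ L2)"
  have sL: "set L = set L1 \<union> set L2" "length L = length L1 + length L2"
    by (auto simp: L_def)
  have ne: "L \<noteq> []" using L1(1) sL(2) by auto
  have so: "sorted (map fst L)" by (simp add: L_def)
  have mx: "Max (fst ` set L) = max (Max (fst ` set L1)) (Max (fst ` set L2))"
    using L1(1) L2(1) by (simp add: sL image_Un Max_Un)
  have sem: "\<forall>w i. 1 \<le> i \<and> i \<le> length w \<longrightarrow> (sat w i (Conj p q) \<longleftrightarrow> semL w i L)"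
  proof (intro allI impI)
    fix w :: "letter list" and i assume "1 \<le> i \<and> i \<le> length w"
    moreover have "semL w i L \<longleftrightarrow> semL w i L1 \<and> semL w i L2"
      unfolding semL_def sL(1) by (rule ball_Un)
    ultimately show "sat w i (Conj p q) \<longleftrightarrow> semL w i L" using L1(2) L2(2) by simp
  qed
  have "Max (fst ` set L) + 2 * length L \<le> fsize (Conj p q) + 1"
    using mx sL(2) L1(3) L2(3) L1(1) L2(1) by (cases L1; cases L2) auto
  then show ?case using ne so sem by blast
next
  case (Nxt p)
  then obtain L1 where
    L1: "L1 \<noteq> []" "sorted (map fst L1)" "\<forall>w i. 1 \<le> i \<and> i \<le> length w \<longrightarrow> (sat w i p \<longleftrightarrow> semL w i L1)"
        "Max (fst ` set L1) + 2 * length L1 \<le> fsize p + 1"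
    by blast
  define L where "L = map (\<lambda>(d,c). (Suc d, c)) L1"
  have ne: "L \<noteq> []" using L1(1) by (simp add: L_def)
  have so: "sorted (map fst L)" using L1(2)
    by (simp add: L_def sorted_map case_prod_beta)
  have img: "fst ` set L = Suc ` (fst ` set L1)"
    by (force simp: L_def image_iff)
  have mx: "Max (fst ` set L) = Suc (Max (fst ` set L1))"
    using L1(1) by (simp add: img mono_Max_commute[symmetric] mono_Suc)
  have sem: "sat w i (Nxt p) \<longleftrightarrow> semL w i L" if i: "1 \<le> i" "i \<le> length w" for w i
  proof (cases "i < length w")
    case True
    then have "sat w i (Nxt p) \<longleftrightarrow> semL w (i+1) L1" using L1(3) i by simp
    also have "\<dots> \<longleftrightarrow> semL w i L" by (auto simp: semL_def L_def)
    finally show ?thesis .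
  next
    case False
    then have "i = length w" using i by simp
    moreover obtain x where "x \<in> set L" using ne by (cases L) auto
    ultimately have "\<not> semL w i L" unfolding semL_def L_def by (auto simp: split_beta)
    then show ?thesis using False by simp
  qed
  have "Max (fst ` set L) + 2 * length L \<le> fsize (Nxt p) + 1"
    using mx L1(4) by (simp add: L_def)
  then show ?case using ne so sem by blast
qed

theorem lemma1:
  shows "\<exists>P. is_pattern P
             \<and> (\<forall>w i. w \<noteq> [] \<and> 1 \<le> i \<and> i \<le> length w \<longrightarrow> (sat w i P \<longleftrightarrow> sat w i \<phi>))
             \<and> fsize P \<le> fsize \<phi>"
proof -
  obtain L where L: "L \<noteq> []" "sorted (map fst L)"
    "\<forall>w i. 1 \<le> i \<and> i \<le> length w \<longrightarrow> (sat w i \<phi> \<longleftrightarrow> semL w i L)"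
    "Max (fst ` set L) + 2 * length L \<le> fsize \<phi> + 1"
    using main by blast
  from mk_props[OF L(1) L(2), of 0] have M:
    "is_pattern (mk 0 L)" "fsize (mk 0 L) + 1 = Max (fst ` set L) + 2 * length L"
    "\<forall>w i. 1 \<le> i \<and> i \<le> length w \<longrightarrow>
        (sat w i (mk 0 L) \<longleftrightarrow> (\<forall>(d,c)\<in>set L. i + d \<le> length w \<and> w ! (i + d - 1) = c))"
    by auto
  show ?thesis
    apply (rule exI[of _ "mk 0 L"])
    using M L(3,4) by (auto simp: semL_def)
qed

end
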